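(* Let the distinct values $v_{j,k}$ ($1\le j\le s$, $1\le k\le m_j$) be partitioned into classes $[v_{j,1},\dots,v_{j,m_j}]$, and let $X_1,\dots,X_n$ be finite domain variables. Introduce variables $Y_1,\dots,Y_{n+1}$ whose values are $s$-tuples of integers (with $Y_i[j]\in\{0,\dots,m_j\}$), with $Y_1=(0,\dots,0)$, and for each $1\le i\le n$ the ternary constraint $E(X_i,Y_i,Y_{i+1})$ which holds iff for every $1\le j\le s$: $X_i\neq v_{j,k}$ for all $k>Y_i[j]+1$, and $Y_{i+1}[j]=Y_i[j]+1$ if $X_i=v_{j,Y_i[j]+1}$, and $Y_{i+1}[j]=Y_i[j]$ otherwise. Then (a) an assignment to $X_1,\dots,X_n$ satisfies $\mathrm{Precedence}([[v_{1,1},\dots,v_{1,m_1}],\dots,[v_{s,1},\dots,v_{s,m_s}]],[X_1,\dots,X_n])$ iff it extends to an assignment of the $Y_i$ with $Y_1=(0,\dots,0)$ satisfying all $E(X_i,Y_i,Y_{i+1})$; and (b) if $D(Y_1)=\{(0,\dots,0)\}$ and each $E(X_i,Y_i,Y_{i+1})$ is GAC (with all domains nonempty), then this Precedence constraint is GAC on the domains of $X_1,\dots,X_n$.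
   Context: A support of a constraint is an assignment of a value from its domain to each of its variables that satisfies it; a constraint is GAC iff every value in every variable's domain belongs to some support. For distinct values $a,b$, $\mathrm{Precedence}([a,b],[X_1,\dots,X_n])$ holds iff $\min\{i \mid X_i=a \text{ or } i=n+1\} < \min\{i \mid X_i=b \text{ or } i=n+2\}$. $\mathrm{Precedence}([[v_{1,1},\dots,v_{1,m_1}],\dots,[v_{s,1},\dots,v_{s,m_s}]],[X_1,\dots,X_n])$ holds iff $\mathrm{Precedence}([v_{j,k},v_{j,k+1}],[X_1,\dots,X_n])$ holds for all $1\le j\le s$, $1\le k<m_j$. *)

theory Defs
  imports Main
begin

text \<open>Positions are 0-based: list position i corresponds to the paper's index i+1.
  The value classes [v_{j,1},...,v_{j,m_j}] are the lists vs!j (j < s = length vs),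
  so v_{j,k} = (vs ! (j-1)) ! (k-1).\<close>

text \<open>Precedence([a,b],[X_1..X_n]): first position of a (or n+1) is smaller than
  first position of b (or n+2).  0-based: fallbacks are n and n+1.\<close>
definition prec_pair :: "'a \<Rightarrow> 'a \<Rightarrow> 'a list \<Rightarrow> bool" where
  "prec_pair a b xs \<longleftrightarrow>
     (LEAST i. (i < length xs \<and> xs ! i = a) \<or> i = length xs)
       < (LEAST i. (i < length xs \<and> xs ! i = b) \<or> i = Suc (length xs))"

definition precedence :: "'a list list \<Rightarrow> 'a list \<Rightarrow> bool" where
  "precedence vs xs \<longleftrightarrow>
     (\<forall>j < length vs. \<forall>k. Suc k < length (vs ! j) \<longrightarrow>
        prec_pair (vs ! j ! k) (vs ! j ! Suc k) xs)"

definition Ytuples :: "'a list list \<Rightarrow> nat list set" where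
  "Ytuples vs = {y. length y = length vs \<and> (\<forall>j < length vs. y ! j \<le> length (vs ! j))}"

text \<open>Paper: X_i differs from v_{j,k}
  for all k > Y_i[j]+1 (1-based k), i.e. from (vs!j)!k for 0-based k \<ge> Y_i[j]+1;
  Y_{i+1}[j] = Y_i[j]+1 if X_i = v_{j,Y_i[j]+1} = (vs!j)!(Y_i[j]), else Y_i[j].\<close>
definition E_con :: "'a list list \<Rightarrow> 'a \<Rightarrow> nat list \<Rightarrow> nat list \<Rightarrow> bool" where
  "E_con vs x y y' \<longleftrightarrow>
     (\<forall>j < length vs.
        (\<forall>k. Suc (y ! j) \<le> k \<and> k < length (vs ! j) \<longrightarrow> x \<noteq> vs ! j ! k) \<and>
        y' ! j = (if y ! j < length (vs ! j) \<and> x = vs ! j ! (y ! j)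
                  then Suc (y ! j) else y ! j))"

definition GAC :: "('a list \<Rightarrow> bool) \<Rightarrow> 'a set list \<Rightarrow> bool" where
  "GAC C Ds \<longleftrightarrow>
     (\<forall>i < length Ds. \<forall>d \<in> Ds ! i. \<exists>t. length t = length Ds \<and>
        (\<forall>k < length Ds. t ! k \<in> Ds ! k) \<and> t ! i = d \<and> C t)"

definition GAC3 :: "('a \<Rightarrow> 'b \<Rightarrow> 'c \<Rightarrow> bool) \<Rightarrow> 'a set \<Rightarrow> 'b set \<Rightarrow> 'c set \<Rightarrow> bool" where
  "GAC3 C D1 D2 D3 \<longleftrightarrow>
     (\<forall>a \<in> D1. \<exists>b \<in> D2. \<exists>c \<in> D3. C a b c) \<and>
     (\<forall>b \<in> D2. \<exists>a \<in> D1. \<exists>c \<in> D3. C a b c) \<and>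
     (\<forall>c \<in> D3. \<exists>a \<in> D1. \<exists>b \<in> D2. C a b c)"

end

theory Submission
  imports Defs
begin

definition stp :: "'a list list \<Rightarrow> 'a \<Rightarrow> nat list \<Rightarrow> nat list" where
  "stp vs x y = map (\<lambda>j. if y!j < length (vs!j) \<and> x = vs!j!(y!j) then Suc (y!j) else y!j) [0..<length vs]"

definition okx :: "'a list list \<Rightarrow> 'a \<Rightarrow> nat list \<Rightarrow> bool" where
  "okx vs x y \<longleftrightarrow> (\<forall>j<length vs. \<forall>k. Suc (y!j) \<le> k \<and> k < length (vs!j) \<longrightarrow> x \<noteq> vs!j!k)"

definition Yof :: "'a list list \<Rightarrow> 'a list \<Rightarrow> nat list" where
  "Yof vs p = foldl (\<lambda>y x. stp vs x y) (replicate (length vs) 0) p"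

lemma stp_nth: "j < length vs \<Longrightarrow> stp vs x y ! j = (if y!j < length (vs!j) \<and> x = vs!j!(y!j) then Suc (y!j) else y!j)"
  by (simp add: stp_def)

lemma stp_len: "length (stp vs x y) = length vs" by (simp add: stp_def)

lemma Yof_snoc: "Yof vs (p @ [x]) = stp vs x (Yof vs p)"
  by (simp add: Yof_def)

lemma E_con_iff:
  assumes "length y' = length vs"
  shows "E_con vs x y y' \<longleftrightarrow> okx vs x y \<and> y' = stp vs x y"
proof -
  have "y' = stp vs x y \<longleftrightarrow> (\<forall>j<length vs. y'!j = (if y ! j < length (vs ! j) \<and> x = vs ! j ! (y ! j)
                  then Suc (y ! j) else y ! j))"
    using assms by (simp add: list_eq_iff_nth_eq stp_len stp_nth)
  moreover have gen: "\<And>P Q n. (\<forall>j<(n::nat). P j \<and> Q j) \<longleftrightarrow> (\<forall>j<n. P j) \<and> (\<forall>j<n. Q j)" by blast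
  ultimately show ?thesis unfolding E_con_def okx_def by (simp only: gen)
qed

lemma dist_cls: "distinct (concat vs) \<Longrightarrow> j < length vs \<Longrightarrow> distinct (vs!j)"
  by (metis distinct_concat_iff nth_mem)

lemma prec_pair_iff:
  assumes "a \<noteq> b"
  shows "prec_pair a b xs \<longleftrightarrow> (\<forall>i<length xs. xs!i = b \<longrightarrow> (\<exists>i'<i. xs!i' = a))"
proof -
  define A where "A = (LEAST i. (i < length xs \<and> xs ! i = a) \<or> i = length xs)"
  define B where "B = (LEAST i. (i < length xs \<and> xs ! i = b) \<or> i = Suc (length xs))"
  have A1: "(A < length xs \<and> xs ! A = a) \<or> A = length xs"
    unfolding A_def by (rule LeastI[of _ "length xs"]) simp
  have A2: "\<And>i. i < length xs \<Longrightarrow> xs!i = a \<Longrightarrow> A \<le> i"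
    unfolding A_def by (rule Least_le) simp
  have B1: "(B < length xs \<and> xs ! B = b) \<or> B = Suc (length xs)"
    unfolding B_def by (rule LeastI[of _ "Suc (length xs)"]) simp
  have B2: "\<And>i. i < length xs \<Longrightarrow> xs!i = b \<Longrightarrow> B \<le> i"
    unfolding B_def by (rule Least_le) simp
  have "prec_pair a b xs \<longleftrightarrow> A < B" unfolding prec_pair_def A_def B_def ..
  also have "\<dots> \<longleftrightarrow> (\<forall>i<length xs. xs!i = b \<longrightarrow> (\<exists>i'<i. xs!i' = a))"
  proof
    assume "A < B"
    show "\<forall>i<length xs. xs!i = b \<longrightarrow> (\<exists>i'<i. xs!i' = a)"
    proof (intro allI impI)
      fix i assume "i < length xs" "xs!i = b"
      then have "B \<le> i" using B2 by auto
      then have "A < i" using \<open>A < B\<close> by simp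
      then have "A < length xs" using \<open>i < length xs\<close> by simp
      then show "\<exists>i'<i. xs!i' = a" using A1 \<open>A < i\<close> by blast
    qed
  next
    assume H: "\<forall>i<length xs. xs!i = b \<longrightarrow> (\<exists>i'<i. xs!i' = a)"
    show "A < B"
    proof (cases "B = Suc (length xs)")
      case True then show ?thesis using A1 by auto
    next
      case False
      then have "B < length xs" "xs!B = b" using B1 by auto
      then obtain i' where "i' < B" "xs!i' = a" using H by blast
      then show ?thesis using A2[of i'] \<open>B < length xs\<close> by auto
    qed
  qed
  finally show ?thesis .
qed

lemma invariant:
  assumes D: "distinct (concat vs)"
    and ok: "\<forall>i<length p. okx vs (p!i) (Yof vs (take i p))"
  shows "length (Yof vs p) = length vs \<and>
    (\<forall>j<length vs. Yof vs p ! j \<le> length (vs!j) \<and>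
       (\<forall>k<length (vs!j). vs!j!k \<in> set p \<longleftrightarrow> k < Yof vs p ! j))"
  using ok
proof (induction p rule: rev_induct)
  case Nil
  then show ?case by (simp add: Yof_def)
next
  case (snoc x p)
  have okp: "\<forall>i<length p. okx vs (p!i) (Yof vs (take i p))"
  proof (intro allI impI)
    fix i assume "i < length p"
    then show "okx vs (p!i) (Yof vs (take i p))"
      using snoc.prems[rule_format, of i] by (simp add: nth_append)
  qed
  note IH = snoc.IH[OF okp]
  have okl: "okx vs x (Yof vs p)" using snoc.prems[rule_format, of "length p"] by simp
  define y where "y = Yof vs p"
  have ly: "length y = length vs" using IH y_def by simp
  have L: "length (Yof vs (p @ [x])) = length vs" by (simp add: Yof_snoc stp_len)
  have R: "\<forall>j<length vs. Yof vs (p @ [x]) ! j \<le> length (vs!j) \<and>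
       (\<forall>k<length (vs!j). vs!j!k \<in> set (p @ [x]) \<longleftrightarrow> k < Yof vs (p @ [x]) ! j)"
  proof (intro allI impI)
    fix j assume j: "j < length vs"
    have dj: "distinct (vs!j)" using dist_cls[OF D j] .
    have yj: "y!j \<le> length (vs!j)" and sj: "\<forall>k<length (vs!j). vs!j!k \<in> set p \<longleftrightarrow> k < y!j"
      using IH j y_def by auto
    have okj: "\<forall>k. Suc (y!j) \<le> k \<and> k < length (vs!j) \<longrightarrow> x \<noteq> vs!j!k"
      using okl j y_def unfolding okx_def by auto
    have st: "Yof vs (p @ [x]) ! j = (if y!j < length (vs!j) \<and> x = vs!j!(y!j) then Suc (y!j) else y!j)"
      using j by (simp add: Yof_snoc stp_nth y_def)
    have A: "Yof vs (p @ [x]) ! j \<le> length (vs!j)" using st yj by auto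
    have B: "\<forall>k<length (vs!j). vs!j!k \<in> set (p @ [x]) \<longleftrightarrow> k < Yof vs (p @ [x]) ! j"
    proof (intro allI impI)
      fix k assume k: "k < length (vs!j)"
      show "vs!j!k \<in> set (p @ [x]) \<longleftrightarrow> k < Yof vs (p @ [x]) ! j"
      proof (cases "y!j < length (vs!j) \<and> x = vs!j!(y!j)")
        case True
        have "vs!j!k = vs!j!(y!j) \<longleftrightarrow> k = y!j" using dj k True nth_eq_iff_index_eq by blast
        then show ?thesis using True st sj k by auto
      next
        case False
        note nf = False
        have "x \<noteq> vs!j!k \<or> k < y!j"
        proof (cases "k < y!j")
          case True then show ?thesis by simp
        next
          case False
          then have "k = y!j \<or> Suc (y!j) \<le> k" by auto
          then show ?thesis using nf okj k by auto
        qed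
        then show ?thesis using nf st sj k by auto
      qed
    qed
    show "Yof vs (p @ [x]) ! j \<le> length (vs!j) \<and>
       (\<forall>k<length (vs!j). vs!j!k \<in> set (p @ [x]) \<longleftrightarrow> k < Yof vs (p @ [x]) ! j)"
      using A B by blast
  qed
  show ?case using L R by blast
qed

lemma partA:
  assumes D: "distinct (concat vs)" and len: "length xs = n"
  shows "precedence vs xs \<longleftrightarrow>
              (\<exists>ys. length ys = Suc n \<and> set ys \<subseteq> Ytuples vs \<and>
                    ys ! 0 = replicate (length vs) 0 \<and>
                    (\<forall>i < n. E_con vs (xs ! i) (ys ! i) (ys ! Suc i)))"
proof
  assume P: "precedence vs xs"
  have tk: "take i (take m xs) = take i xs" if "i \<le> m" for i m using that by (simp add: min_def)
  have okall: "\<forall>i<m. okx vs (xs!i) (Yof vs (take i xs))" if "m \<le> n" for m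
    using that
  proof (induction m)
    case 0 then show ?case by simp
  next
    case (Suc m)
    have IH: "\<forall>i<m. okx vs (xs!i) (Yof vs (take i xs))" using Suc by simp
    have okt: "\<forall>i<length (take m xs). okx vs (take m xs!i) (Yof vs (take i (take m xs)))"
      using IH by simp
    note inv = invariant[OF D okt]
    have m: "m < length xs" using Suc.prems len by simp
    have "okx vs (xs!m) (Yof vs (take m xs))"
      unfolding okx_def
    proof (intro allI impI notI)
      fix j k assume j: "j < length vs" and kk: "Suc (Yof vs (take m xs) ! j) \<le> k \<and> k < length (vs!j)"
        and eq: "xs!m = vs!j!k"
      have dj: "distinct (vs!j)" using dist_cls[OF D j] .
      obtain k' where k': "k = Suc k'" using kk by (cases k) auto
      have ne: "vs!j!k' \<noteq> vs!j!Suc k'" using dj kk k' nth_eq_iff_index_eq by fastforce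
      have "prec_pair (vs!j!k') (vs!j!Suc k') xs" using P j kk k' unfolding precedence_def by auto
      then have "\<forall>i<length xs. xs!i = vs!j!Suc k' \<longrightarrow> (\<exists>i'<i. xs!i' = vs!j!k')"
        using prec_pair_iff[OF ne] by blast
      then obtain i' where i': "i' < m" "xs!i' = vs!j!k'"
        using m eq k' by blast
      have "i' < length (take m xs)" using i' m by simp
      then have "take m xs ! i' \<in> set (take m xs)" by (rule nth_mem)
      then have "vs!j!k' \<in> set (take m xs)" using i' by simp
      then have "k' < Yof vs (take m xs) ! j" using inv j kk k' by auto
      then show False using kk k' by auto
    qed
    then show ?case using IH less_Suc_eq by auto
  qed
  have okn: "\<forall>i<n. okx vs (xs!i) (Yof vs (take i xs))" using okall[of n] by simp
  have invi: "length (Yof vs (take i xs)) = length vs \<and>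
    (\<forall>j<length vs. Yof vs (take i xs) ! j \<le> length (vs!j))" if "i \<le> n" for i
  proof -
    have "\<forall>l<length (take i xs). okx vs (take i xs!l) (Yof vs (take l (take i xs)))"
      using okn that by simp
    from invariant[OF D this] show ?thesis by simp
  qed
  define ys where "ys = map (\<lambda>i. Yof vs (take i xs)) [0..<Suc n]"
  show "\<exists>ys. length ys = Suc n \<and> set ys \<subseteq> Ytuples vs \<and>
                    ys ! 0 = replicate (length vs) 0 \<and>
                    (\<forall>i < n. E_con vs (xs ! i) (ys ! i) (ys ! Suc i))"
  proof (intro exI conjI allI impI)
    show "length ys = Suc n" by (simp add: ys_def)
    show "set ys \<subseteq> Ytuples vs" using invi by (auto simp: ys_def Ytuples_def)
    show "ys ! 0 = replicate (length vs) 0" by (simp add: ys_def Yof_def del: upt_Suc)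
    fix i assume i: "i < n"
    have "take (Suc i) xs = take i xs @ [xs!i]" using i len by (simp add: take_Suc_conv_app_nth)
    then have "ys ! Suc i = stp vs (xs!i) (ys!i)" using i
      by (simp add: ys_def Yof_snoc del: upt_Suc)
    moreover have "length (ys ! Suc i) = length vs" using i invi[of "Suc i"] by (simp add: ys_def del: upt_Suc)
    moreover have "okx vs (xs!i) (ys!i)"
    proof -
      have yi: "ys!i = Yof vs (take i xs)" using i by (simp add: ys_def del: upt_Suc)
      from okn i have "okx vs (xs!i) (Yof vs (take i xs))" by blast
      then show ?thesis using yi by simp
    qed
    ultimately show "E_con vs (xs ! i) (ys ! i) (ys ! Suc i)" using E_con_iff[of "ys ! Suc i" vs "xs!i" "ys!i"] by blast
  qed
next
  assume "\<exists>ys. length ys = Suc n \<and> set ys \<subseteq> Ytuples vs \<and>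
                    ys ! 0 = replicate (length vs) 0 \<and>
                    (\<forall>i < n. E_con vs (xs ! i) (ys ! i) (ys ! Suc i))"
  then obtain ys where ly: "length ys = Suc n" and sy: "set ys \<subseteq> Ytuples vs"
    and y0: "ys ! 0 = replicate (length vs) 0"
    and E: "\<forall>i < n. E_con vs (xs ! i) (ys ! i) (ys ! Suc i)" by blast
  have lyi: "length (ys!i) = length vs" if "i \<le> n" for i
  proof -
    have "ys!i \<in> set ys" using ly that by simp
    then show ?thesis using sy by (auto simp: Ytuples_def)
  qed
  have Ei: "okx vs (xs!i) (ys!i) \<and> ys!Suc i = stp vs (xs!i) (ys!i)" if "i < n" for i
  proof -
    have "E_con vs (xs ! i) (ys ! i) (ys ! Suc i)" using E that by blast
    then show ?thesis using that lyi[of "Suc i"] E_con_iff[of "ys ! Suc i" vs "xs!i" "ys!i"] by simp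
  qed
  have yeq: "ys!i = Yof vs (take i xs)" if "i \<le> n" for i
    using that
  proof (induction i)
    case 0 then show ?case using y0 by (simp add: Yof_def)
  next
    case (Suc i)
    have "take (Suc i) xs = take i xs @ [xs!i]" using Suc.prems len by (simp add: take_Suc_conv_app_nth)
    then show ?case using Suc Ei[of i] by (simp add: Yof_snoc)
  qed
  have okn: "\<forall>i<length xs. okx vs (xs!i) (Yof vs (take i xs))"
  proof (intro allI impI)
    fix i assume "i < length xs"
    then have "i < n" using len by simp
    then show "okx vs (xs!i) (Yof vs (take i xs))" using Ei[of i] yeq[of i] by simp
  qed
  have okt: "\<forall>l<length (take i xs). okx vs (take i xs!l) (Yof vs (take l (take i xs)))" for i
  proof (intro allI impI)
    fix l assume "l < length (take i xs)"
    then have l: "l < i" "l < length xs" by auto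
    then have "okx vs (xs!l) (Yof vs (take l xs))" using okn by blast
    then show "okx vs (take i xs!l) (Yof vs (take l (take i xs)))" using l by (simp add: min_def)
  qed
  show "precedence vs xs"
    unfolding precedence_def
  proof (intro allI impI)
    fix j k assume j: "j < length vs" and k: "Suc k < length (vs!j)"
    have dj: "distinct (vs!j)" using dist_cls[OF D j] .
    have ne: "vs!j!k \<noteq> vs!j!Suc k" using k by (simp add: nth_eq_iff_index_eq[OF dj])
    show "prec_pair (vs!j!k) (vs!j!Suc k) xs"
      unfolding prec_pair_iff[OF ne]
    proof (intro allI impI)
      fix i assume i: "i < length xs" and eq: "xs!i = vs!j!Suc k"
      from okn i have "okx vs (xs!i) (Yof vs (take i xs))" by blast
      then have "\<forall>k'. Suc (Yof vs (take i xs) ! j) \<le> k' \<and> k' < length (vs!j) \<longrightarrow> xs!i \<noteq> vs!j!k'"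
        using j unfolding okx_def by blast
      then have "Suc (Yof vs (take i xs) ! j) \<le> Suc k \<and> Suc k < length (vs!j) \<longrightarrow> xs!i \<noteq> vs!j!Suc k"
        by (rule spec)
      then have "\<not> (Suc (Yof vs (take i xs) ! j) \<le> Suc k)"
        using eq k by blast
      then have "k < Yof vs (take i xs) ! j" by simp
      moreover have "\<forall>k<length (vs!j). vs!j!k \<in> set (take i xs) \<longleftrightarrow> k < Yof vs (take i xs) ! j"
        using invariant[OF D okt[of i]] j by blast
      ultimately have "vs!j!k \<in> set (take i xs)" using k by simp
      then obtain i' where "i' < length (take i xs)" "take i xs ! i' = vs!j!k"
        by (auto simp: in_set_conv_nth)
      then show "\<exists>i'<i. xs!i' = vs!j!k" by auto
    qed
  qed
qed

lemma backw:
  assumes G: "\<forall>i<n. GAC3 (E_con vs) (DX i) (DY i) (DY (Suc i))"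
  shows "i \<le> n \<Longrightarrow> y \<in> DY i \<Longrightarrow> \<exists>X Y. Y i = y \<and> (\<forall>l\<le>i. Y l \<in> DY l) \<and>
           (\<forall>l<i. X l \<in> DX l \<and> E_con vs (X l) (Y l) (Y (Suc l)))"
proof (induction i arbitrary: y)
  case 0
  then show ?case by (intro exI[of _ "\<lambda>_. undefined"] exI[of _ "\<lambda>_. y"]) auto
next
  case (Suc i)
  have "GAC3 (E_con vs) (DX i) (DY i) (DY (Suc i))" using G Suc.prems by simp
  then obtain a b where a: "a \<in> DX i" and b: "b \<in> DY i" and e: "E_con vs a b y"
    using Suc.prems unfolding GAC3_def by blast
  obtain X Y where Y: "Y i = b" "\<forall>l\<le>i. Y l \<in> DY l"
    "\<forall>l<i. X l \<in> DX l \<and> E_con vs (X l) (Y l) (Y (Suc l))"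
    using Suc.IH[of b] Suc.prems b by auto
  show ?case
  proof (intro exI[of _ "X(i := a)"] exI[of _ "Y(Suc i := y)"] conjI allI impI)
    show "(Y(Suc i := y)) (Suc i) = y" by simp
  next
    fix l assume "l \<le> Suc i"
    then show "(Y(Suc i := y)) l \<in> DY l" using Y Suc.prems by (cases "l = Suc i") auto
  next
    fix l assume l: "l < Suc i"
    show "(X(i := a)) l \<in> DX l" using l Y a by (cases "l = i") auto
    show "E_con vs ((X(i := a)) l) ((Y(Suc i := y)) l) ((Y(Suc i := y)) (Suc l))"
    proof (cases "l = i")
      case True then show ?thesis using e Y by simp
    next
      case False then have "l < i" using l by simp
      then show ?thesis using Y by simp
    qed
  qed
qed

lemma forw:
  assumes G: "\<forall>i<n. GAC3 (E_con vs) (DX i) (DY i) (DY (Suc i))"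
  shows "i \<le> n \<Longrightarrow> y \<in> DY i \<Longrightarrow> \<exists>X Y. Y i = y \<and> (\<forall>l. i \<le> l \<and> l \<le> n \<longrightarrow> Y l \<in> DY l) \<and>
           (\<forall>l. i \<le> l \<and> l < n \<longrightarrow> X l \<in> DX l \<and> E_con vs (X l) (Y l) (Y (Suc l)))"
proof (induction "n - i" arbitrary: i y)
  case 0
  then have "i = n" by simp
  then show ?case using 0 by (intro exI[of _ "\<lambda>_. undefined"] exI[of _ "\<lambda>_. y"]) auto
next
  case (Suc d)
  then have i: "i < n" by simp
  have "GAC3 (E_con vs) (DX i) (DY i) (DY (Suc i))" using G i by simp
  then obtain a c where a: "a \<in> DX i" and c: "c \<in> DY (Suc i)" and e: "E_con vs a y c"
    using Suc.prems unfolding GAC3_def by blast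
  have "d = n - Suc i" using Suc.hyps by simp
  then obtain X Y where Y: "Y (Suc i) = c" "\<forall>l. Suc i \<le> l \<and> l \<le> n \<longrightarrow> Y l \<in> DY l"
    "\<forall>l. Suc i \<le> l \<and> l < n \<longrightarrow> X l \<in> DX l \<and> E_con vs (X l) (Y l) (Y (Suc l))"
    using Suc.hyps(1)[of "Suc i" c] i c by auto
  show ?case
  proof (intro exI[of _ "X(i := a)"] exI[of _ "Y(i := y)"] conjI allI impI)
    show "(Y(i := y)) i = y" by simp
  next
    fix l assume "i \<le> l \<and> l \<le> n"
    then show "(Y(i := y)) l \<in> DY l" using Y Suc.prems by (cases "l = i") auto
  next
    fix l assume l: "i \<le> l \<and> l < n"
    show "(X(i := a)) l \<in> DX l" using l Y a by (cases "l = i") auto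
    show "E_con vs ((X(i := a)) l) ((Y(i := y)) l) ((Y(i := y)) (Suc l))"
    proof (cases "l = i")
      case True then show ?thesis using e Y by simp
    next
      case False then have "Suc i \<le> l" using l by simp
      then show ?thesis using Y l by simp
    qed
  qed
qed

theorem mainTheorem9:
  fixes vs :: "'a list list" and n :: nat
  assumes "distinct (concat vs)"
  shows "(\<forall>xs. length xs = n \<longrightarrow>
            (precedence vs xs \<longleftrightarrow>
              (\<exists>ys. length ys = Suc n \<and> set ys \<subseteq> Ytuples vs \<and>
                    ys ! 0 = replicate (length vs) 0 \<and>
                    (\<forall>i < n. E_con vs (xs ! i) (ys ! i) (ys ! Suc i)))))
       \<and> (\<forall>(DX :: nat \<Rightarrow> 'a set) (DY :: nat \<Rightarrow> nat list set).
            (\<forall>i < n. finite (DX i) \<and> DX i \<noteq> {}) \<longrightarrow>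
            (\<forall>i \<le> n. DY i \<noteq> {} \<and> DY i \<subseteq> Ytuples vs) \<longrightarrow>
            DY 0 = {replicate (length vs) 0} \<longrightarrow>
            (\<forall>i < n. GAC3 (E_con vs) (DX i) (DY i) (DY (Suc i))) \<longrightarrow>
            GAC (precedence vs) (map DX [0..<n]))"
proof (intro conjI allI impI)
  fix xs :: "'a list" assume "length xs = n"
  then show "precedence vs xs \<longleftrightarrow>
              (\<exists>ys. length ys = Suc n \<and> set ys \<subseteq> Ytuples vs \<and>
                    ys ! 0 = replicate (length vs) 0 \<and>
                    (\<forall>i < n. E_con vs (xs ! i) (ys ! i) (ys ! Suc i)))"
    using partA[OF assms] by blast
next
  fix DX :: "nat \<Rightarrow> 'a set" and DY :: "nat \<Rightarrow> nat list set"
  assume DYs: "\<forall>i \<le> n. DY i \<noteq> {} \<and> DY i \<subseteq> Ytuples vs"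
    and DY0: "DY 0 = {replicate (length vs) 0}"
    and G: "\<forall>i < n. GAC3 (E_con vs) (DX i) (DY i) (DY (Suc i))"
  show "GAC (precedence vs) (map DX [0..<n])"
    unfolding GAC_def
  proof (intro allI impI ballI)
    fix i d assume i0: "i < length (map DX [0..<n])" and d0: "d \<in> map DX [0..<n] ! i"
    then have i: "i < n" and d: "d \<in> DX i" by auto
    have "GAC3 (E_con vs) (DX i) (DY i) (DY (Suc i))" using G i by simp
    then obtain b c where b: "b \<in> DY i" and c: "c \<in> DY (Suc i)" and e: "E_con vs d b c"
      using d unfolding GAC3_def by blast
    obtain X1 Y1 where Y1: "Y1 i = b" "\<forall>l\<le>i. Y1 l \<in> DY l"
        "\<forall>l<i. X1 l \<in> DX l \<and> E_con vs (X1 l) (Y1 l) (Y1 (Suc l))"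
      using backw[OF G, of i b] i b by auto
    obtain X2 Y2 where Y2: "Y2 (Suc i) = c" "\<forall>l. Suc i \<le> l \<and> l \<le> n \<longrightarrow> Y2 l \<in> DY l"
        "\<forall>l. Suc i \<le> l \<and> l < n \<longrightarrow> X2 l \<in> DX l \<and> E_con vs (X2 l) (Y2 l) (Y2 (Suc l))"
      using forw[OF G, of "Suc i" c] i c by auto
    define X where "X l = (if l < i then X1 l else if l = i then d else X2 l)" for l
    define Y where "Y l = (if l \<le> i then Y1 l else Y2 l)" for l
    have YD: "Y l \<in> DY l" if "l \<le> n" for l
      using that Y1 Y2 by (cases "l \<le> i") (auto simp: Y_def)
    have XE: "X l \<in> DX l \<and> E_con vs (X l) (Y l) (Y (Suc l))" if l: "l < n" for l
    proof (cases "l < i")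
      case True then show ?thesis using Y1 by (simp add: X_def Y_def)
    next
      case False
      show ?thesis
      proof (cases "l = i")
        case True then show ?thesis using Y1 Y2 d e by (simp add: X_def Y_def)
      next
        case False2: False
        then have "Suc i \<le> l" using False by simp
        then show ?thesis using Y2 l by (simp add: X_def Y_def)
      qed
    qed
    define t where "t = map X [0..<n]"
    define ys where "ys = map Y [0..<Suc n]"
    have "\<exists>ys. length ys = Suc n \<and> set ys \<subseteq> Ytuples vs \<and>
                    ys ! 0 = replicate (length vs) 0 \<and>
                    (\<forall>i < n. E_con vs (t ! i) (ys ! i) (ys ! Suc i))"
    proof (intro exI[of _ ys] conjI allI impI)
      show "length ys = Suc n" by (simp add: ys_def)
      show "set ys \<subseteq> Ytuples vs"
      proof
        fix z assume "z \<in> set ys"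
        then have "z \<in> Y ` {0..<Suc n}" by (simp add: ys_def del: upt_Suc)
        then obtain l where "l < Suc n" "z = Y l" by auto
        then have "l \<le> n" "z = Y l" by simp_all
        then show "z \<in> Ytuples vs" using YD DYs by blast
      qed
      have "Y 0 \<in> DY 0" using YD by simp
      then show "ys ! 0 = replicate (length vs) 0" using DY0 by (simp add: ys_def del: upt_Suc)
      fix l assume l: "l < n"
      have "ys ! l = Y l" "ys ! Suc l = Y (Suc l)" "t ! l = X l" using l
        by (simp_all add: ys_def t_def del: upt_Suc)
      then show "E_con vs (t ! l) (ys ! l) (ys ! Suc l)" using XE[OF l] by simp
    qed
    then have P: "precedence vs t" using partA[OF assms, of t n] by (simp add: t_def)
    show "\<exists>t. length t = length (map DX [0..<n]) \<and>
        (\<forall>k < length (map DX [0..<n]). t ! k \<in> map DX [0..<n] ! k) \<and> t ! i = d \<and> precedence vs t"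
    proof (intro exI[of _ t] conjI allI impI)
      show "length t = length (map DX [0..<n])" by (simp add: t_def)
      show "t ! i = d" using i by (simp add: t_def X_def)
      show "precedence vs t" by (rule P)
      fix k assume "k < length (map DX [0..<n])"
      then show "t ! k \<in> map DX [0..<n] ! k" using XE by (simp add: t_def)
    qed
  qed
qed

end
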